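(* For every integer $n\ge 2$, the Bergman projection $P$ on the polydisc $\mathbb{D}^n$ is not of weak-type $(1,1)$: there is no constant $C>0$ such that for all bounded measurable $f$ on $\mathbb{D}^n$ and all $\lambda>0$, $\left|\{z\in\mathbb{D}^n : |P(f)(z)|>\lambda\}\right| \le C\|f\|_{L^1(\mathbb{D}^n)}/\lambda$.
   Context: $\mathbb{D}$ is the unit disc in $\mathbb{C}$, $dV$ is Lebesgue measure and $|U|$ the Lebesgue measure of $U$. The Bergman projection on $\mathbb{D}^n$ is the orthogonal projection of $L^2(\mathbb{D}^n)$ onto its subspace of holomorphic functions, given by $P(f)(z)=\int_{\mathbb{D}^n}K(z;\bar w)f(w)\,dV(w)$ with $K(z;\bar w)=\prod_{j=1}^n\frac{1}{\pi(1-z_j\bar w_j)^2}$. *)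

theory Defs
  imports "HOL-Analysis.Analysis"
begin

text \<open>The polydisc D^n, with n = CARD('n); points are vectors in complex^'n.
  Lebesgue measure on complex^'n is the measure lebesgue (= Lebesgue measure on R^(2n)).\<close>

definition polydisc :: "(complex ^ 'n::finite) set" where
  "polydisc = {z. \<forall>j. norm (z $ j) < 1}"

definition bergman_kernel :: "complex ^ 'n::finite \<Rightarrow> complex ^ 'n \<Rightarrow> complex" where
  "bergman_kernel z w = (\<Prod>j\<in>UNIV. 1 / (of_real pi * (1 - z $ j * cnj (w $ j))\<^sup>2))"

definition bergman_proj :: "(complex ^ 'n::finite \<Rightarrow> complex) \<Rightarrow> complex ^ 'n \<Rightarrow> complex" where
  "bergman_proj f z = (LINT w:polydisc|lebesgue. bergman_kernel z w * f w)"

definition L1_norm_polydisc :: "(complex ^ 'n::finite \<Rightarrow> complex) \<Rightarrow> real" where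
  "L1_norm_polydisc f = (LINT w:polydisc|lebesgue. norm (f w))"

end

theory Submission
  imports Defs
begin

lemma prod_Basis_vec:
  "(\<Prod>b\<in>(Basis::('a::euclidean_space^'n::finite) set). g b) = (\<Prod>i\<in>UNIV. \<Prod>u\<in>Basis. g (axis i u))"
proof -
  have "(\<Prod>b\<in>(Basis::('a^'n) set). g b) = (\<Prod>i\<in>UNIV. \<Prod>b\<in>(\<Union>u\<in>Basis. {axis i u}). g b)"
    unfolding Basis_vec_def
    by (rule prod.UNION_disjoint) (auto simp: axis_eq_axis nonzero_Basis)
  also have "\<dots> = (\<Prod>i\<in>UNIV. \<Prod>u\<in>Basis. g (axis i u))"
  proof (rule prod.cong[OF refl])
    fix i
    have "(\<Union>u\<in>Basis. {axis i u::'a^'n}) = axis i ` (Basis :: 'a set)" by auto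
    moreover have "inj_on (axis i) (Basis :: 'a set)" by (auto intro!: inj_onI simp: axis_eq_axis)
    ultimately show "(\<Prod>b\<in>(\<Union>u\<in>Basis. {axis i u::'a^'n}). g b) = (\<Prod>u\<in>Basis. g (axis i u))"
      by (simp add: prod.reindex)
  qed
  finally show ?thesis .
qed

lemma mem_box_vec: 
  fixes x l u :: "'a::euclidean_space ^ 'n::finite"
  shows "x \<in> box l u \<longleftrightarrow> (\<forall>j. x $ j \<in> box (l $ j) (u $ j))"
  by (auto simp: mem_box Basis_vec_def inner_axis)

lemma mem_cbox_vec: 
  fixes x l u :: "'a::euclidean_space ^ 'n::finite"
  shows "x \<in> cbox l u \<longleftrightarrow> (\<forall>j. x $ j \<in> cbox (l $ j) (u $ j))"
  by (auto simp: mem_box Basis_vec_def inner_axis)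

lemma emeasure_box_vec:
  fixes l u :: "complex ^ 'n::finite"
  assumes "\<And>j. Re (l$j) \<le> Re (u$j)" "\<And>j. Im (l$j) \<le> Im (u$j)"
  shows "emeasure lborel (box l u) = ennreal (\<Prod>j\<in>UNIV. (Re (u$j) - Re (l$j)) * (Im (u$j) - Im (l$j)))"
proof -
  have "emeasure lborel (box l u) = ennreal (\<Prod>b\<in>Basis. (u - l) \<bullet> b)"
    using assms by (intro emeasure_lborel_box) (auto simp: Basis_vec_def inner_axis Basis_complex_def)
  also have "(\<Prod>b\<in>Basis. (u - l) \<bullet> b) = (\<Prod>j\<in>UNIV. (Re (u$j) - Re (l$j)) * (Im (u$j) - Im (l$j)))"
    by (simp add: prod_Basis_vec inner_axis Basis_complex_def inner_complex_def)
  finally show ?thesis .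
qed

lemma emeasure_cbox_vec:
  fixes l u :: "complex ^ 'n::finite"
  assumes "\<And>j. Re (l$j) \<le> Re (u$j)" "\<And>j. Im (l$j) \<le> Im (u$j)"
  shows "emeasure lborel (cbox l u) = ennreal (\<Prod>j\<in>UNIV. (Re (u$j) - Re (l$j)) * (Im (u$j) - Im (l$j)))"
proof -
  have "emeasure lborel (cbox l u) = ennreal (\<Prod>b\<in>Basis. (u - l) \<bullet> b)"
    using assms by (intro emeasure_lborel_cbox) (auto simp: Basis_vec_def inner_axis Basis_complex_def)
  also have "(\<Prod>b\<in>Basis. (u - l) \<bullet> b) = (\<Prod>j\<in>UNIV. (Re (u$j) - Re (l$j)) * (Im (u$j) - Im (l$j)))"
    by (simp add: prod_Basis_vec inner_axis Basis_complex_def inner_complex_def)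
  finally show ?thesis .
qed


lemma coord_rel:
  fixes z w :: complex and a d e :: real
  assumes z: "norm z < 1" and a: "0 < a" "a < 1" and w: "norm (w - of_real a) \<le> d"
    and d: "d \<le> (1-a)*e/10" and e: "0 \<le> e" "e \<le> 1"
  shows "norm ((1 - z * of_real a)\<^sup>2 / (1 - z * cnj w)\<^sup>2 - 1) \<le> e"
proof -
  define D where "D = 1 - z * of_real a"
  define E where "E = 1 - z * cnj w"
  have nza: "norm (z * of_real a) < a" using z a by (simp add: norm_mult)
  have nD: "norm D \<ge> 1 - a"
    using norm_triangle_ineq2[of 1 "z * of_real a"] nza unfolding D_def by simp
  have Dpos: "norm D > 0" using nD a by linarith
  have "E - D = z * cnj (of_real a - w)" unfolding D_def E_def by (simp add: algebra_simps)
  hence "norm (E - D) = norm z * norm (w - of_real a)"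
    by (simp only: norm_mult complex_mod_cnj norm_minus_commute)
  also have "\<dots> \<le> 1 * d" using z w by (intro mult_mono) auto
  finally have nED: "norm (E - D) \<le> d" by simp
  define s where "s = norm (E - D) / norm D"
  have s0: "0 \<le> s" unfolding s_def by simp
  have "s \<le> d / (1 - a)" unfolding s_def
    using nED nD a Dpos by (meson frac_le norm_ge_zero order_trans diff_gt_0_iff_gt[THEN iffD2])
  also have "\<dots> \<le> e/10" using d a by (simp add: divide_le_eq mult.commute)
  finally have se: "s \<le> e/10" .
  have nE: "norm E \<ge> norm D * (1 - s)"
  proof -
    have "norm E \<ge> norm D - norm (E - D)" using norm_triangle_ineq2[of D "D - E"]
      by (simp add: norm_minus_commute)
    moreover have "norm (E - D) = norm D * s" unfolding s_def using Dpos by simp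
    ultimately show ?thesis by (simp add: algebra_simps)
  qed
  have nDE: "norm (D + E) \<le> norm D * (2 + s)"
  proof -
    have "norm (D + E) \<le> norm (2 * D) + norm (E - D)"
      using norm_triangle_ineq[of "2*D" "E - D"] by simp
    moreover have "norm (E - D) = norm D * s" unfolding s_def using Dpos by simp
    ultimately show ?thesis by (simp add: algebra_simps norm_mult)
  qed
  have "norm D * (1 - s) > 0" using Dpos se e by simp
  hence Epos: "norm E > 0" using nE by linarith
  have "D\<^sup>2 / E\<^sup>2 - 1 = (D - E) * (D + E) / E\<^sup>2"
    using Epos by (simp add: field_simps power2_eq_square)
  hence "norm (D\<^sup>2 / E\<^sup>2 - 1) = norm (E - D) * norm (D + E) / (norm E)\<^sup>2"
    by (simp add: norm_mult norm_divide norm_power norm_minus_commute)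
  also have "\<dots> \<le> (norm D * s) * (norm D * (2 + s)) / (norm D * (1 - s))\<^sup>2"
  proof (rule frac_le)
    show "norm (E - D) * norm (D + E) \<le> norm D * s * (norm D * (2 + s))"
      using nDE Dpos s0 unfolding s_def by (intro mult_mono) auto
    show "0 < (norm D * (1 - s))\<^sup>2" using Dpos se e by simp
    show "(norm D * (1 - s))\<^sup>2 \<le> (norm E)\<^sup>2" using nE se e Dpos
      by (intro power_mono) auto
  qed (use s0 in auto)
  also have "\<dots> = (norm D)\<^sup>2 * (s * (2 + s)) / ((norm D)\<^sup>2 * (1 - s)\<^sup>2)"
    by (simp add: power_mult_distrib power2_eq_square mult_ac)
  also have "\<dots> = s * (2 + s) / (1 - s)\<^sup>2"
    using Dpos by (intro mult_divide_mult_cancel_left) simp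
  also have "\<dots> \<le> e"
  proof -
    have "s * (2 + s) \<le> (e/10) * 3" using se s0 e by (intro mult_mono) auto
    moreover have "(1 - s)\<^sup>2 \<ge> (9/10)\<^sup>2" using se e s0
      by (intro power_mono) auto
    ultimately have "s * (2 + s) / (1 - s)\<^sup>2 \<le> (e/10)*3 / (9/10)\<^sup>2"
      using s0 e by (intro frac_le) auto
    also have "\<dots> \<le> e" using e by (simp add: power2_eq_square divide_le_eq)
    finally show ?thesis .
  qed
  finally show ?thesis unfolding D_def E_def .
qed

lemma kernel_close:
  fixes z w :: "complex ^ 'n::finite" and a d e :: real
  assumes z: "\<And>j. norm (z$j) < 1" and a: "0 < a" "a < 1"
    and w: "\<And>j. norm (w$j - of_real a) \<le> d"
    and d: "d \<le> (1-a)*e/10" and e: "e = 1 / (real CARD('n) * 2 ^ CARD('n))"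
  shows "norm (bergman_kernel z w - bergman_kernel z (\<chi> j. of_real a))
           \<le> norm (bergman_kernel z (\<chi> j. of_real a)) / 2"
proof -
  define n where "n = CARD('n)"
  have n1: "n \<ge> 1" unfolding n_def by (simp add: Suc_leI)
  have "real n * 2 ^ n \<ge> 1 * 2" using n1
    by (intro mult_mono) (auto simp: self_le_power order_trans[OF _ self_le_power[of 2 n]])
  hence e0: "0 \<le> e" and e1: "e \<le> 1/2" unfolding e n_def[symmetric] by (auto simp: field_simps)
  define D where "D j = 1 - z$j * of_real a" for j
  define E where "E j = 1 - z$j * cnj (w$j)" for j
  define p where "p j = 1 / (of_real pi * (D j)\<^sup>2)" for j
  define \<alpha> where "\<alpha> j = ((D j)\<^sup>2 / (E j)\<^sup>2) / 2" for j
  have rel: "norm ((D j)\<^sup>2 / (E j)\<^sup>2 - 1) \<le> e" for j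
    unfolding D_def E_def using coord_rel[OF z a w d e0] e1 by simp
  have Dnz: "D j \<noteq> 0" for j
  proof
    assume "D j = 0"
    hence "z$j * of_real a = 1" unfolding D_def by simp
    hence "norm (z$j) * a = 1" by (metis norm_mult norm_of_real norm_one a(1) abs_of_pos)
    thus False using z[of j] a by (smt (verit) mult_left_le_one_le norm_ge_zero)
  qed
  have Enz: "E j \<noteq> 0" for j
  proof
    assume "E j = 0"
    hence "norm ((D j)\<^sup>2 / (E j)\<^sup>2 - 1) = 1" by simp
    thus False using rel[of j] e1 by simp
  qed
  have kw: "1 / (of_real pi * (1 - z $ j * cnj (w $ j))\<^sup>2) = 2 * p j * \<alpha> j" for j
    unfolding p_def \<alpha>_def using Dnz[of j] Enz[of j] unfolding E_def[symmetric]
    by (simp add: field_simps)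
  have kc: "1 / (of_real pi * (1 - z $ j * cnj ((\<chi> j. complex_of_real a) $ j))\<^sup>2) = 2 * p j * (1/2)" for j
    unfolding p_def D_def by simp
  have Kw: "bergman_kernel z w = (\<Prod>j\<in>UNIV. 2 * p j) * (\<Prod>j\<in>UNIV. \<alpha> j)"
    unfolding bergman_kernel_def kw by (simp add: prod.distrib)
  have Kc: "bergman_kernel z (\<chi> j. of_real a) = (\<Prod>j\<in>UNIV. 2 * p j) * (\<Prod>j\<in>(UNIV::'n set). 1/2)"
    unfolding bergman_kernel_def kc by (rule prod.distrib)
  have Kc': "bergman_kernel z (\<chi> j. of_real a) = (\<Prod>j\<in>UNIV. p j)"
    unfolding bergman_kernel_def p_def D_def by simp
  have na: "norm (\<alpha> j - 1/2) \<le> e/2" for j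
  proof -
    have "\<alpha> j - 1/2 = ((D j)\<^sup>2 / (E j)\<^sup>2 - 1) / 2" unfolding \<alpha>_def by (simp add: field_simps)
    hence "norm (\<alpha> j - 1/2) = norm ((D j)\<^sup>2 / (E j)\<^sup>2 - 1) / norm (2::complex)"
      by (metis norm_divide)
    thus ?thesis using rel[of j] by simp
  qed
  have na1: "norm (\<alpha> j) \<le> 1" for j
    using na[of j] norm_triangle_ineq2[of "\<alpha> j" "1/2"] e1 by simp
  have "norm ((\<Prod>j\<in>UNIV. \<alpha> j) - (\<Prod>j\<in>(UNIV::'n set). 1/2)) \<le> (\<Sum>j\<in>UNIV. norm (\<alpha> j - 1/2))"
    by (rule norm_prod_diff) (use na1 in auto)
  also have "\<dots> \<le> (\<Sum>j\<in>(UNIV::'n set). e/2)" by (intro sum_mono na)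
  also have "\<dots> = real n * e / 2" by (simp add: n_def)
  finally have pd: "norm ((\<Prod>j\<in>UNIV. \<alpha> j) - (\<Prod>j\<in>(UNIV::'n set). 1/2)) \<le> real n * e / 2" .
  have "norm (bergman_kernel z w - bergman_kernel z (\<chi> j. of_real a))
      = norm (\<Prod>j\<in>UNIV. 2 * p j) * norm ((\<Prod>j\<in>UNIV. \<alpha> j) - (\<Prod>j\<in>(UNIV::'n set). 1/2))"
    unfolding Kw Kc by (simp add: norm_mult right_diff_distrib[symmetric])
  also have "\<dots> \<le> norm (\<Prod>j\<in>UNIV. 2 * p j) * (real n * e / 2)"
    by (intro mult_left_mono pd) simp
  also have "norm (\<Prod>j\<in>UNIV. 2 * p j) = 2 ^ n * norm (\<Prod>j\<in>UNIV. p j)"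
    by (simp add: prod.distrib norm_mult n_def prod_norm[symmetric] norm_power)
  also have "2 ^ n * norm (\<Prod>j\<in>UNIV. p j) * (real n * e / 2) = norm (\<Prod>j\<in>UNIV. p j) / 2"
    using n1 unfolding e n_def[symmetric] by (simp add: field_simps)
  finally show ?thesis unfolding Kc' .
qed


lemma meas_vec_nth[measurable (raw)]:
  "f \<in> borel_measurable M \<Longrightarrow> (\<lambda>x. (f x :: 'a::euclidean_space^'n::finite) $ j) \<in> borel_measurable M"
  by (rule measurable_compose[of f M borel]) (auto intro!: borel_measurable_continuous_onI linear_continuous_on bounded_linear_vec_nth)

lemma meas_cnj[measurable (raw)]: "f \<in> borel_measurable M \<Longrightarrow> (\<lambda>x. cnj (f x :: complex)) \<in> borel_measurable M"
  by (rule measurable_compose[of f M borel]) (auto intro: borel_measurable_continuous_onI continuous_intros)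

lemma meas_kernel: "(\<lambda>x. bergman_kernel (fst x) (snd x :: complex^'n::finite)) \<in> borel_measurable (lborel \<Otimes>\<^sub>M lborel)"
  unfolding bergman_kernel_def by measurable

lemma meas_kernel1[measurable]: "bergman_kernel z \<in> borel_measurable lborel"
  unfolding bergman_kernel_def by measurable

lemma open_polydisc: "open (polydisc :: (complex ^ 'n::finite) set)"
proof -
  have "polydisc = (\<Inter>j\<in>UNIV. {z::complex^'n. norm (z $ j) < 1})"
    by (auto simp: polydisc_def)
  also have "open \<dots>"
    by (intro open_INT ballI open_Collect_less continuous_intros) simp_all
  finally show ?thesis .
qed

lemma proj_meas:
  fixes Q :: "(complex^'n::finite) set"
  assumes Q: "Q \<subseteq> polydisc" "Q \<in> sets borel"
  shows "bergman_proj (\<lambda>w. indicator Q w) = (\<lambda>z. \<integral>w. indicator Q w *\<^sub>R bergman_kernel z w \<partial>lborel)"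
    and "bergman_proj (\<lambda>w. indicator Q w) \<in> borel_measurable lebesgue"
proof -
  have [measurable]: "Q \<in> sets borel" using Q by simp
  note meas_kernel[measurable]
  show eq: "bergman_proj (\<lambda>w. indicator Q w) = (\<lambda>z. \<integral>w. indicator Q w *\<^sub>R bergman_kernel z w \<partial>lborel)"
  proof
    fix z :: "complex^'n"
    have "bergman_proj (\<lambda>w. indicator Q w) z = (\<integral>w. indicator Q w *\<^sub>R bergman_kernel z w \<partial>lebesgue)"
      unfolding bergman_proj_def set_lebesgue_integral_def
      by (intro Bochner_Integration.integral_cong refl) (use Q in \<open>auto simp: indicator_def\<close>)
    also have "\<dots> = (\<integral>w. indicator Q w *\<^sub>R bergman_kernel z w \<partial>lborel)"
      by (intro integral_completion) measurable
    finally show "bergman_proj (\<lambda>w. indicator Q w) z = (\<integral>w. indicator Q w *\<^sub>R bergman_kernel z w \<partial>lborel)" .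
  qed
  have "(\<lambda>z. \<integral>w. indicator Q w *\<^sub>R bergman_kernel z w \<partial>lborel) \<in> borel_measurable lborel"
  proof (rule lborel.borel_measurable_lebesgue_integral)
    show "(\<lambda>(z,w). indicator Q w *\<^sub>R bergman_kernel z w) \<in> borel_measurable (lborel \<Otimes>\<^sub>M lborel)"
      by measurable
  qed
  thus "bergman_proj (\<lambda>w. indicator Q w) \<in> borel_measurable lebesgue"
    unfolding eq by (rule measurable_completion)
qed

lemma kernel_cont:
  assumes "z \<in> polydisc" "Q \<subseteq> polydisc"
  shows "continuous_on Q (bergman_kernel (z::complex^'n::finite))"
proof -
  have nz: "of_real pi * (1 - z $ j * cnj (w $ j))\<^sup>2 \<noteq> 0" if "w \<in> Q" for w j
  proof -
    have "norm (z$j) < 1" "norm (w$j) < 1" using assms that by (auto simp: polydisc_def)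
    hence "norm (z $ j * cnj (w $ j)) < 1" by (simp add: norm_mult mult_strict_mono' less_le_trans[OF _ mult_left_le_one_le]) (smt (verit, ccfv_SIG) mult_left_le_one_le norm_ge_zero)
    hence "z $ j * cnj (w $ j) \<noteq> 1" by auto
    thus ?thesis by simp
  qed
  show ?thesis unfolding bergman_kernel_def
    by (intro continuous_intros) (use nz in auto)
qed

lemma proj_lower:
  fixes Q :: "(complex^'n::finite) set" and z c :: "complex^'n"
  assumes Q: "compact Q" "Q \<subseteq> polydisc" and z: "z \<in> polydisc"
    and close: "\<And>w. w \<in> Q \<Longrightarrow> norm (bergman_kernel z w - bergman_kernel z c) \<le> norm (bergman_kernel z c)/2"
  shows "norm (bergman_proj (\<lambda>w. indicator Q w) z) \<ge> measure lborel Q * norm (bergman_kernel z c) / 2"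
proof -
  have Qb: "Q \<in> sets borel" using Q by (simp add: compact_imp_closed)
  define B where "B = norm (bergman_kernel z c) / 2"
  have eq: "bergman_proj (\<lambda>w. indicator Q w) z = (\<integral>w. indicator Q w *\<^sub>R bergman_kernel z w \<partial>lborel)"
    using proj_meas(1)[OF Q(2) Qb] by simp
  have int1: "integrable lborel (\<lambda>w. indicator Q w *\<^sub>R bergman_kernel z w)"
    by (rule borel_integrable_compact[OF Q(1) kernel_cont[OF z Q(2)]])
  have int2: "integrable lborel (\<lambda>w. indicator Q w *\<^sub>R bergman_kernel z c)"
    by (rule borel_integrable_compact[OF Q(1)]) (rule continuous_on_const)
  have int3: "integrable lborel (\<lambda>w. indicator Q w *\<^sub>R B)"
    by (rule borel_integrable_compact[OF Q(1)]) (rule continuous_on_const)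
  define R where "R = (\<integral>w. indicator Q w *\<^sub>R (bergman_kernel z w - bergman_kernel z c) \<partial>lborel)"
  have "R = (\<integral>w. indicator Q w *\<^sub>R bergman_kernel z w - indicator Q w *\<^sub>R bergman_kernel z c \<partial>lborel)"
    unfolding R_def by (simp add: scaleR_diff_right)
  also have "\<dots> = (\<integral>w. indicator Q w *\<^sub>R bergman_kernel z w \<partial>lborel) - (\<integral>w. indicator Q w *\<^sub>R bergman_kernel z c \<partial>lborel)"
    by (rule Bochner_Integration.integral_diff[OF int1 int2])
  also have "(\<integral>w. indicator Q w *\<^sub>R bergman_kernel z c \<partial>lborel) = measure lborel Q *\<^sub>R bergman_kernel z c"
    by (subst integral_scaleR_left) (use emeasure_bounded_finite[OF compact_imp_bounded[OF Q(1)]] in \<open>simp_all add: integrable_indicator_iff Qb\<close>)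
  finally have decomp: "bergman_proj (\<lambda>w. indicator Q w) z = measure lborel Q *\<^sub>R bergman_kernel z c + R"
    unfolding eq by simp
  have "norm R \<le> (\<integral>w. indicator Q w *\<^sub>R B \<partial>lborel)"
    unfolding R_def
  proof (rule Bochner_Integration.integral_norm_bound_integral)
    show "integrable lborel (\<lambda>w. indicator Q w *\<^sub>R (bergman_kernel z w - bergman_kernel z c))"
      using Bochner_Integration.integrable_diff[OF int1 int2] by (simp add: scaleR_diff_right)
    show "integrable lborel (\<lambda>w. indicator Q w *\<^sub>R B)" by (rule int3)
    show "norm (indicator Q w *\<^sub>R (bergman_kernel z w - bergman_kernel z c)) \<le> indicator Q w *\<^sub>R B" for w
      using close[of w] unfolding B_def by (auto simp: indicator_def)
  qed
  also have "\<dots> = measure lborel Q * B" by simp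
  finally have nR: "norm R \<le> measure lborel Q * B" .
  have "measure lborel Q * norm (bergman_kernel z c) - norm R \<le> norm (bergman_proj (\<lambda>w. indicator Q w) z)"
    unfolding decomp using norm_triangle_ineq2[of "measure lborel Q *\<^sub>R bergman_kernel z c" "- R"]
    by simp
  thus ?thesis using nR unfolding B_def by simp
qed


lemma coord_box:
  fixes x :: complex and r t :: real
  assumes r: "0 < r" "r \<le> t" "t \<le> 1/2"
    and x: "1 - 2 * t < Re x" "Re x < 1 - t" "0 < Im x" "Im x < t"
  shows "norm x < 1" and "norm (1 - x * of_real (1 - r)) \<le> 4 * t"
proof -
  have "(Re x)\<^sup>2 < (1 - t)\<^sup>2" using x r by (intro power_strict_mono) auto
  moreover have "(Im x)\<^sup>2 < t\<^sup>2" using x r by (intro power_strict_mono) auto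
  moreover have "(1 - t)\<^sup>2 + t\<^sup>2 \<le> 1" using r by (simp add: power2_eq_square algebra_simps)
  ultimately have "(Re x)\<^sup>2 + (Im x)\<^sup>2 < 1" by linarith
  thus nx: "norm x < 1" by (simp add: cmod_def)
  have "1 - x * of_real (1 - r) = (1 - x) + of_real r * x" by (simp add: algebra_simps)
  hence "norm (1 - x * of_real (1 - r)) \<le> norm (1 - x) + norm (of_real r * x)"
    by (metis norm_triangle_ineq)
  also have "norm (1 - x) \<le> \<bar>Re (1 - x)\<bar> + \<bar>Im (1 - x)\<bar>" by (rule cmod_le)
  also have "\<bar>Re (1 - x)\<bar> + \<bar>Im (1 - x)\<bar> \<le> 3 * t"
  proof -
    have "\<bar>Re (1 - x)\<bar> = 1 - Re x" using x r by simp
    moreover have "\<bar>Im (1 - x)\<bar> = Im x" using x by simp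
    ultimately show ?thesis using x by linarith
  qed
  also have "norm (of_real r * x) \<le> t"
  proof -
    have "norm (of_real r * x) = r * norm x" using r by (simp add: norm_mult)
    also have "\<dots> \<le> r * 1" using nx r by (intro mult_left_mono) auto
    finally show ?thesis using r by simp
  qed
  finally show "norm (1 - x * of_real (1 - r)) \<le> 4 * t" by simp
qed


lemma mem_box_complex': "x \<in> box a b \<longleftrightarrow> Re a < Re x \<and> Re x < Re b \<and> Im a < Im x \<and> Im x < Im b"
  by (auto simp: mem_box Basis_complex_def)

lemma mem_cbox_complex': "x \<in> cbox a b \<longleftrightarrow> Re a \<le> Re x \<and> Re x \<le> Re b \<and> Im a \<le> Im x \<and> Im x \<le> Im b"
  by (auto simp: mem_box Basis_complex_def)

theorem mainTheorem2:
  assumes "CARD('n::finite) \<ge> 2"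
  shows "\<not> (\<exists>C::real. C > 0 \<and>
           (\<forall>(f :: complex ^ 'n \<Rightarrow> complex) (l::real).
              set_borel_measurable lebesgue polydisc f \<and>
              (\<exists>B. \<forall>w\<in>polydisc. norm (f w) \<le> B) \<and> l > 0 \<longrightarrow>
              emeasure lebesgue {z \<in> polydisc. norm (bergman_proj f z) > l}
                \<le> ennreal (C * L1_norm_polydisc f / l)))"
proof
  assume "\<exists>C::real. C > 0 \<and>
           (\<forall>(f :: complex ^ 'n \<Rightarrow> complex) (l::real).
              set_borel_measurable lebesgue polydisc f \<and>
              (\<exists>B. \<forall>w\<in>polydisc. norm (f w) \<le> B) \<and> l > 0 \<longrightarrow>
              emeasure lebesgue {z \<in> polydisc. norm (bergman_proj f z) > l}
                \<le> ennreal (C * L1_norm_polydisc f / l))"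
  then obtain C :: real where C: "C > 0" and H: "\<And>(f :: complex ^ 'n \<Rightarrow> complex) (l::real).
              set_borel_measurable lebesgue polydisc f \<and>
              (\<exists>B. \<forall>w\<in>polydisc. norm (f w) \<le> B) \<and> l > 0 \<Longrightarrow>
              emeasure lebesgue {z \<in> polydisc. norm (bergman_proj f z) > l}
                \<le> ennreal (C * L1_norm_polydisc f / l)"
    by blast
  define n where "n = CARD('n)"
  have n1: "n \<ge> 1" using assms unfolding n_def by simp
  obtain j1 j2 :: 'n where j12: "j1 \<noteq> j2"
  proof -
    have "\<not> (\<forall>j1 j2::'n. j1 = j2)"
    proof
      assume "\<forall>j1 j2::'n. j1 = j2"
      hence "(UNIV::'n set) = {undefined}" by auto
      hence "CARD('n) = card {undefined::'n}" by (metis (full_types))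
      hence "CARD('n) = 1" by simp
      thus False using assms by simp
    qed
    thus ?thesis using that by blast
  qed
  obtain K :: nat where K: "4 * C * (16*pi)^n < real K + 1"
  proof -
    obtain K :: nat where "4 * C * (16*pi)^n < real K" using reals_Archimedean2 by blast
    thus ?thesis using that[of K] by simp
  qed
  define r :: real where "r = 1 / 2^(K+1)"
  define a :: real where "a = 1 - r"
  define e :: real where "e = 1 / (real n * 2^n)"
  define d :: real where "d = r * e / 10"
  have r0: "0 < r" unfolding r_def by simp
  have r2: "r \<le> 1/2" unfolding r_def by (simp add: field_simps) 
  have a01: "0 < a" "a < 1" using r0 r2 unfolding a_def by auto
  have e0: "0 < e" unfolding e_def using n1 by simp
  have e1: "e \<le> 1"
  proof -
    have "real n * 2 ^ n \<ge> 1 * 1" using n1 by (intro mult_mono) auto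
    thus ?thesis unfolding e_def by simp
  qed
  have d0: "0 < d" unfolding d_def using r0 e0 by simp
  have dr: "d < r" unfolding d_def using r0 e0 e1 by simp
  define c :: "complex^'n" where "c = (\<chi> j. of_real a)"
  define lo :: "complex^'n" where "lo = (\<chi> j. Complex (a - d/2) (-d/2))"
  define hi :: "complex^'n" where "hi = (\<chi> j. Complex (a + d/2) (d/2))"
  define Q where "Q = cbox lo hi"
  have Qw: "norm (w$j - of_real a) \<le> d" if "w \<in> Q" for w j
  proof -
    have "Re (lo$j) \<le> Re (w$j) \<and> Re (w$j) \<le> Re (hi$j) \<and> Im (lo$j) \<le> Im (w$j) \<and> Im (w$j) \<le> Im (hi$j)"
      using that unfolding Q_def mem_cbox_vec mem_cbox_complex' by blast
    hence b: "a - d/2 \<le> Re (w$j)" "Re (w$j) \<le> a + d/2" "-d/2 \<le> Im (w$j)" "Im (w$j) \<le> d/2"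
      unfolding lo_def hi_def by auto
    have "\<bar>Re (w$j) - a\<bar> \<le> d/2" by (subst abs_le_iff) (use b in linarith)
    moreover have "\<bar>Im (w$j)\<bar> \<le> d/2" by (subst abs_le_iff) (use b in linarith)
    ultimately have "\<bar>Re (w$j - of_real a)\<bar> \<le> d/2" "\<bar>Im (w$j - of_real a)\<bar> \<le> d/2"
      by simp_all
    thus ?thesis using cmod_le[of "w$j - of_real a"] by linarith
  qed
  have QP: "Q \<subseteq> polydisc"
  proof
    fix w assume w: "w \<in> Q"
    have "norm (w$j) < 1" for j
    proof -
      have "norm (w$j) \<le> norm (of_real a :: complex) + norm (w$j - of_real a)"
        by (metis add.commute diff_add_cancel norm_triangle_ineq)
      also have "\<dots> \<le> a + d" using Qw[OF w, of j] a01 by simp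
      also have "\<dots> < 1" using dr unfolding a_def by simp
      finally show ?thesis .
    qed
    thus "w \<in> polydisc" by (simp add: polydisc_def)
  qed
  have Qc: "compact Q" unfolding Q_def by simp
  have Qb: "Q \<in> sets borel" unfolding Q_def by simp
  define m where "m = measure lborel Q"
  have "emeasure lborel Q = ennreal (\<Prod>j\<in>UNIV. (Re (hi$j) - Re (lo$j)) * (Im (hi$j) - Im (lo$j)))"
    unfolding Q_def by (rule emeasure_cbox_vec) (use d0 in \<open>auto simp: lo_def hi_def\<close>)
  also have "(\<Prod>j\<in>UNIV. (Re (hi$j) - Re (lo$j)) * (Im (hi$j) - Im (lo$j))) = (d*d)^n"
    by (simp add: lo_def hi_def n_def)
  finally have "emeasure lborel Q = ennreal ((d*d)^n)" .
  hence mval: "m = (d*d)^n" unfolding m_def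
    by (intro measure_eq_emeasure_eq_ennreal) auto
  have m0: "m > 0" using d0 mval by simp
  define f :: "complex^'n \<Rightarrow> complex" where "f = (\<lambda>w. indicator Q w)"
  have Pl: "sets lebesgue \<supseteq> sets borel"
    by (auto intro: sets_completionI_sets)
  have [measurable]: "polydisc \<in> sets lebesgue" using Pl borel_open[OF open_polydisc] by blast
  have [measurable]: "Q \<in> sets lebesgue" using Pl Qb by blast
  have fm: "set_borel_measurable lebesgue polydisc f"
    unfolding set_borel_measurable_def f_def by measurable
  have fb: "\<exists>B. \<forall>w\<in>polydisc. norm (f w) \<le> B"
    by (rule exI[of _ 1]) (auto simp: f_def indicator_def)
  have L1: "L1_norm_polydisc f = m"
  proof -
    have "L1_norm_polydisc f = (\<integral>w. indicator Q w \<partial>lebesgue)"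
      unfolding L1_norm_polydisc_def set_lebesgue_integral_def f_def
      by (intro Bochner_Integration.integral_cong refl) (use QP in \<open>auto simp: indicator_def\<close>)
    also have "\<dots> = measure lebesgue Q" by simp
    also have "\<dots> = m" unfolding m_def using Qb by simp
    finally show ?thesis .
  qed
  define X :: real where "X = 4^K * r^(2*n)"
  have X0: "X > 0" unfolding X_def using r0 by simp
  define l where "l = m / (4 * (16*pi)^n * X)"
  have l0: "l > 0" unfolding l_def using m0 X0 by simp
  define LS where "LS = {z \<in> polydisc. norm (bergman_proj f z) > l}"
  have HH: "emeasure lebesgue LS \<le> ennreal (C * m / l)"
    using H[of f l] fm fb l0 L1 unfolding LS_def by simp
  have [measurable]: "bergman_proj f \<in> borel_measurable lebesgue"
    unfolding f_def by (rule proj_meas(2)[OF QP Qb])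
  have LSm: "LS \<in> sets lebesgue" unfolding LS_def by measurable
  define ek where "ek k j = (if j = j1 then k else 0) + (if j = j2 then K - k else (0::nat))" for k j
  define Lb where "Lb p = Complex (1 - 2^(p+1)*r) 0" for p :: nat
  define Ub where "Ub p = Complex (1 - 2^p*r) (2^p*r)" for p :: nat
  define Bx where "Bx k = box (\<chi> j. Lb (ek k j)) (\<chi> j. Ub (ek k j) :: complex^'n)" for k
  have ek_le: "ek k j \<le> K" if "k \<le> K" for k j
    unfolding ek_def using that j12 by auto
  have ek1: "ek k j1 = k" if "k \<le> K" for k unfolding ek_def using j12 by simp
  have sumek: "(\<Sum>j\<in>UNIV. ek k j) = K" if "k \<le> K" for k
    unfolding ek_def using that by (simp add: sum.distrib)
  have sK: "2^p * r \<le> 1/2" if "p \<le> K" for p :: nat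
  proof -
    have "(2::real)^p \<le> 2^K" using that by (intro power_increasing) auto
    hence "2^p * r \<le> 2^K * r" using r0 by simp
    also have "2^K * r = 1/2" unfolding r_def by (simp add: field_simps)
    finally show ?thesis .
  qed
  have memB: "z \<in> Bx k \<longleftrightarrow> (\<forall>j. 1 - 2 * (2^(ek k j)*r) < Re (z$j) \<and> Re (z$j) < 1 - 2^(ek k j)*r
                 \<and> 0 < Im (z$j) \<and> Im (z$j) < 2^(ek k j)*r)" for z k
    unfolding Bx_def mem_box_vec mem_box_complex' Lb_def Ub_def by (simp add: mult_ac)
  have Bmeas: "emeasure lborel (Bx k) = ennreal X" if "k \<le> K" for k
  proof -
    have "emeasure lborel (Bx k) = ennreal (\<Prod>j\<in>UNIV. (2^(ek k j)*r) * (2^(ek k j)*r))"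
      unfolding Bx_def by (subst emeasure_box_vec) (use r0 in \<open>auto simp: Lb_def Ub_def mult_ac\<close>)
    also have "(\<Prod>j\<in>UNIV. (2^(ek k j)*r) * (2^(ek k j)*r)) = (\<Prod>j\<in>UNIV. 4^(ek k j) * r^2)"
      by (intro prod.cong refl) (simp add: power2_eq_square power_mult_distrib[symmetric])
    also have "\<dots> = 4^(\<Sum>j\<in>UNIV. ek k j) * r^(2*n)"
      by (simp add: prod.distrib power_sum n_def power_mult mult.commute flip: power_mult)
    also have "\<dots> = X" unfolding X_def sumek[OF that] ..
    finally show ?thesis .
  qed
  have disj: "disjoint_family_on Bx {..K}"
  unfolding disjoint_family_on_def
  proof (intro ballI impI)
    fix k k' assume kk: "k \<in> {..K}" "k' \<in> {..K}" "k \<noteq> k'"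
    show "Bx k \<inter> Bx k' = {}"
    proof (rule ccontr)
      assume "Bx k \<inter> Bx k' \<noteq> {}"
      then obtain z where z: "z \<in> Bx k" "z \<in> Bx k'" by blast
      have A: "1 - 2 * (2^k*r) < Re (z$j1) \<and> Re (z$j1) < 1 - 2^k*r"
        using z(1) ek1[of k] kk unfolding memB by (metis atMost_iff)
      have B: "1 - 2 * (2^k'*r) < Re (z$j1) \<and> Re (z$j1) < 1 - 2^k'*r"
        using z(2) ek1[of k'] kk unfolding memB by (metis atMost_iff)
      have mono2: "2 * (2^k*r) \<le> 2^k'*r" if "k < k'" for k k' :: nat
      proof -
        have "(2::real)^(Suc k) \<le> 2^k'" using that by (intro power_increasing) auto
        thus ?thesis using r0 by simp
      qed
      show False
      proof (cases "k < k'")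
        case True
        from mono2[OF True] A B show False by linarith
      next
        case False
        hence "k' < k" using kk(3) by simp
        from mono2[OF this] A B show False by linarith
      qed
    qed
  qed
  have Kz: "norm (bergman_kernel z c) = (\<Prod>j\<in>UNIV. 1 / (pi * (norm (1 - z$j * of_real a))\<^sup>2))" for z
    unfolding bergman_kernel_def c_def prod_norm[symmetric]
    by (simp add: norm_divide norm_mult norm_power)
  have p4: "(2::real)^p * 2^p = 4^p" for p :: nat by (simp flip: power_mult_distrib)
  have sub: "Bx k \<subseteq> LS" if "k \<le> K" for k
  proof
    fix z assume z: "z \<in> Bx k"
    have cb: "norm (z$j) < 1 \<and> norm (1 - z$j * of_real a) \<le> 4 * (2^(ek k j)*r)" for j
    proof -
      have t: "0 < r" "r \<le> 2^(ek k j)*r" "2^(ek k j)*r \<le> 1/2"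
        using r0 sK[OF ek_le[OF that]] by auto
      have zz: "1 - 2 * (2^(ek k j)*r) < Re (z$j)" "Re (z$j) < 1 - 2^(ek k j)*r"
        "0 < Im (z$j)" "Im (z$j) < 2^(ek k j)*r"
        using z unfolding memB by auto
      show ?thesis using coord_box[OF t zz] unfolding a_def by simp
    qed
    have zP: "z \<in> polydisc" using cb by (simp add: polydisc_def)
    have close: "norm (bergman_kernel z w - bergman_kernel z c) \<le> norm (bergman_kernel z c)/2"
      if "w \<in> Q" for w
      unfolding c_def
      by (rule kernel_close[of z a w d e]) (use cb a01 Qw[OF that] in \<open>auto simp: d_def a_def e_def n_def\<close>)
    have low: "norm (bergman_proj f z) \<ge> m * norm (bergman_kernel z c) / 2"
      unfolding f_def m_def by (rule proj_lower[OF Qc QP zP close])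
    have "(\<Prod>j\<in>UNIV. 1 / (pi * (4 * (2^(ek k j)*r))\<^sup>2)) \<le> (\<Prod>j\<in>UNIV. 1 / (pi * (norm (1 - z$j * of_real a))\<^sup>2))"
    proof (rule prod_mono, intro conjI)
      fix j
      show "0 \<le> 1 / (pi * (4 * (2^(ek k j)*r))\<^sup>2)" by simp
      have pos: "0 < norm (1 - z$j * of_real a)"
      proof -
        have "norm (z$j * of_real a) < 1" using cb[of j] a01
          by (simp add: norm_mult) (smt (verit) mult_left_le_one_le norm_ge_zero)
        hence "z$j * of_real a \<noteq> 1" by auto
        thus ?thesis by simp
      qed
      show "1 / (pi * (4 * (2^(ek k j)*r))\<^sup>2) \<le> 1 / (pi * (norm (1 - z$j * of_real a))\<^sup>2)"
        using cb[of j] pos by (intro divide_left_mono mult_left_mono power_mono mult_pos_pos) auto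
    qed
    also have "(\<Prod>j\<in>UNIV. 1 / (pi * (4 * (2^(ek k j)*r))\<^sup>2)) = 1 / ((16*pi)^n * X)"
    proof -
      have "(\<Prod>j\<in>UNIV. 1 / (pi * (4 * (2^(ek k j)*r))\<^sup>2)) = (\<Prod>j\<in>UNIV. 1 / ((16*pi*r^2) * 4^(ek k j)))"
        by (intro prod.cong refl) (simp add: power_mult_distrib power2_eq_square power_mult[symmetric] mult_ac p4)
      also have "\<dots> = 1 / ((16*pi*r^2)^n * 4^(\<Sum>j\<in>UNIV. ek k j))"
        by (simp add: prod_dividef prod.distrib power_sum n_def)
      also have "\<dots> = 1 / ((16*pi)^n * X)"
        unfolding sumek[OF that] X_def by (simp add: power_mult_distrib mult_ac flip: power_mult)
      finally show ?thesis .
    qed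
    finally have "1 / ((16*pi)^n * X) \<le> norm (bergman_kernel z c)" unfolding Kz .
    hence "m * (1 / ((16*pi)^n * X)) / 2 \<le> m * norm (bergman_kernel z c) / 2"
      using m0 by (intro divide_right_mono mult_left_mono) auto
    moreover have "m * (1 / ((16*pi)^n * X)) / 2 = 2 * l" unfolding l_def by simp
    ultimately have "2 * l \<le> norm (bergman_proj f z)" using low by linarith
    thus "z \<in> LS" using l0 zP unfolding LS_def by simp
  qed
  have Bb: "Bx k \<in> sets lborel" for k unfolding Bx_def by simp
  have "emeasure lborel (\<Union>k\<in>{..K}. Bx k) = (\<Sum>k\<in>{..K}. emeasure lborel (Bx k))"
    by (rule sum_emeasure[symmetric]) (use Bb disj in auto)
  also have "\<dots> = (\<Sum>k\<in>{..K}. ennreal X)" by (intro sum.cong refl Bmeas) simp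
  also have "\<dots> = ennreal ((real K + 1) * X)" using X0 by (simp add: ennreal_of_nat_eq_real_of_nat ennreal_mult add.commute)
  finally have U: "emeasure lborel (\<Union>k\<in>{..K}. Bx k) = ennreal ((real K + 1) * X)" .
  have "emeasure lebesgue (\<Union>k\<in>{..K}. Bx k) \<le> emeasure lebesgue LS"
    by (rule emeasure_mono) (use sub LSm in auto)
  moreover have "emeasure lebesgue (\<Union>k\<in>{..K}. Bx k) = emeasure lborel (\<Union>k\<in>{..K}. Bx k)"
  proof -
    have "(\<Union>k\<in>{..K}. Bx k) \<in> sets lborel" using Bb by auto
    thus ?thesis by (simp add: sets_completionI_sets)
  qed
  ultimately have "ennreal ((real K + 1) * X) \<le> ennreal (C * m / l)" using HH U by simp
  hence le: "(real K + 1) * X \<le> C * m / l"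
    using C m0 l0 by (subst (asm) ennreal_le_iff) auto
  have "C * m / l = (4 * C * (16*pi)^n) * X" unfolding l_def using m0 X0 by (simp add: field_simps)
  with le have "(real K + 1) * X \<le> (4 * C * (16*pi)^n) * X" by simp
  hence "real K + 1 \<le> 4 * C * (16*pi)^n" using X0 by simp
  thus False using K by simp
qed


end
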